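(* Assume $\kappa>0$, $\phi_*:=\inf_{r\ge0}\phi(r)>0$ and $\phi_*M>\sigma\bar\theta$. Then every solution of system (CSF) aligns exponentially fast: there exist $C_0,\delta>0$, depending on the initial data and the parameters, such that $$\mathcal A(t):=\max_{i,j}|\mathbf v_i(t)-\mathbf v_j(t)|\le C_0e^{-\delta t}\quad\text{for all } t\ge0.$$
   Context: Fix integers $N\ge1$, $n\ge1$, masses $m_1,\dots,m_N>0$ with $M=\sum_i m_i$, parameters $\sigma>0$, $p>0$, $\kappa\ge0$, and a communication kernel $\phi:[0,\infty)\to(0,\infty)$ that is smooth, positive and non-increasing. Write $\phi_{ij}=\phi(|\mathbf x_i-\mathbf x_j|)$, with $|\cdot|$ the Euclidean norm on $\mathbb R^n$. System (CSF) is, for $i=1,\dots,N$, $$\dot{\mathbf x}_i=\mathbf v_i,\qquad \dot{\mathbf v}_i=\sum_{j=1}^N m_j\phi_{ij}(\mathbf v_j-\mathbf v_i)+\sigma(\theta_i-|\mathbf v_i|^p)\mathbf v_i,\qquad \dot\theta_i=\kappa\sum_{j=1}^N m_j\phi_{ij}(\theta_j-\theta_i),$$ with $\mathbf x_i,\mathbf v_i\in\mathbb R^n$ and initial values $\theta_i(0)>0$; solutions are considered for $t\ge0$. Set $\bar\theta=\frac1M\sum_i m_i\theta_i(0)$; this weighted average is conserved in time. *)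

theory Defs
  imports "HOL-Analysis.Analysis"
begin

definition smooth_on_nonneg :: "(real \<Rightarrow> real) \<Rightarrow> bool" where
  "smooth_on_nonneg f \<longleftrightarrow>
     (\<exists>D :: nat \<Rightarrow> real \<Rightarrow> real. D 0 = f \<and>
        (\<forall>k. \<forall>r\<ge>0. (D k has_real_derivative D (Suc k) r) (at r within {0..})))"

definition comm_kernel :: "(real \<Rightarrow> real) \<Rightarrow> bool" where
  "comm_kernel \<phi> \<longleftrightarrow> smooth_on_nonneg \<phi> \<and> (\<forall>r\<ge>0. \<phi> r > 0) \<and>
     (\<forall>r s. 0 \<le> r \<longrightarrow> r \<le> s \<longrightarrow> \<phi> s \<le> \<phi> r)"

definition CSF_solution ::
  "nat \<Rightarrow> (nat \<Rightarrow> real) \<Rightarrow> real \<Rightarrow> real \<Rightarrow> real \<Rightarrow> (real \<Rightarrow> real) \<Rightarrow>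
   (nat \<Rightarrow> real \<Rightarrow> 'a::euclidean_space) \<Rightarrow> (nat \<Rightarrow> real \<Rightarrow> 'a) \<Rightarrow> (nat \<Rightarrow> real \<Rightarrow> real) \<Rightarrow> bool"
  where
  "CSF_solution N m \<sigma> p \<kappa> \<phi> x v \<theta> \<longleftrightarrow>
     (\<forall>i<N. \<forall>t\<ge>0.
        (x i has_vector_derivative v i t) (at t within {0..}) \<and>
        (v i has_vector_derivative
           ((\<Sum>j<N. (m j * \<phi> (norm (x i t - x j t))) *\<^sub>R (v j t - v i t))
            + (\<sigma> * (\<theta> i t - norm (v i t) powr p)) *\<^sub>R v i t)) (at t within {0..}) \<and>
        (\<theta> i has_real_derivative
           (\<kappa> * (\<Sum>j<N. m j * \<phi> (norm (x i t - x j t)) * (\<theta> j t - \<theta> i t))))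
           (at t within {0..}))"

definition vel_diam :: "nat \<Rightarrow> (nat \<Rightarrow> real \<Rightarrow> 'a::real_normed_vector) \<Rightarrow> real \<Rightarrow> real" where
  "vel_diam N v t = Max {norm (v i t - v j t) | i j. i < N \<and> j < N}"

end

theory Submission imports Defs begin

lemma sq_deriv:
  fixes w :: "real \<Rightarrow> 'a::real_inner"
  assumes "(w has_vector_derivative w') (at t within S)"
  shows "((\<lambda>t. inner (w t) (w t)) has_real_derivative 2 * inner (w t) w') (at t within S)"
proof -
  have "(w has_derivative (\<lambda>h. h *\<^sub>R w')) (at t within S)" using assms by (simp add: has_vector_derivative_def)
  from has_derivative_inner[OF this this]
  have "((\<lambda>t. inner (w t) (w t)) has_derivative (\<lambda>h. inner (w t) (h *\<^sub>R w') + inner (h *\<^sub>R w') (w t))) (at t within S)" .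
  then show ?thesis unfolding has_field_derivative_def
    by (rule has_derivative_eq_rhs) (auto simp: inner_commute fun_eq_iff algebra_simps)
qed

lemma first_cross:
  fixes F :: "'k \<Rightarrow> real \<Rightarrow> real" and b :: "real \<Rightarrow> real"
  assumes K: "finite K"
    and dF: "\<And>k t. k \<in> K \<Longrightarrow> t \<ge> tz \<Longrightarrow> (F k has_real_derivative F' k t) (at t within {tz..})"
    and db: "\<And>t. t \<ge> tz \<Longrightarrow> (b has_real_derivative b' t) (at t within {tz..})"
    and init: "\<And>k. k \<in> K \<Longrightarrow> F k tz < b tz"
    and touch: "\<And>k t. k \<in> K \<Longrightarrow> t > tz \<Longrightarrow> F k t = b t \<Longrightarrow> (\<And>j. j \<in> K \<Longrightarrow> F j t \<le> b t) \<Longrightarrow> F' k t < b' t"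
  shows "\<And>k t. k \<in> K \<Longrightarrow> t \<ge> tz \<Longrightarrow> F k t < b t"
proof (rule ccontr)
  fix k t assume k: "k \<in> K" and t: "t \<ge> tz" and neg: "\<not> F k t < b t"
  have cF: "continuous_on {tz..} (F j)" if "j \<in> K" for j
    using dF[OF that] by (meson atLeast_iff continuous_on_eq_continuous_within DERIV_continuous)
  have cb: "continuous_on {tz..} b"
    using db by (meson atLeast_iff continuous_on_eq_continuous_within DERIV_continuous)
  define S where "S = (\<Union>j\<in>K. {tz..t} \<inter> (\<lambda>s. b s - F j s) -` {..0})"
  have cS: "closed S" unfolding S_def
  proof (intro closed_UN K ballI)
    fix j assume "j \<in> K"
    have "continuous_on {tz..t} (\<lambda>s. b s - F j s)"
      by (intro continuous_intros continuous_on_subset[OF cb] continuous_on_subset[OF cF[OF \<open>j\<in>K\<close>]]) auto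
    then show "closed ({tz..t} \<inter> (\<lambda>s. b s - F j s) -` {..0})"
      by (rule continuous_closed_preimage) auto
  qed
  have "t \<in> S" using k t neg unfolding S_def by (auto simp: not_less)
  hence ne: "S \<noteq> {}" by auto
  have bb: "bdd_below S" unfolding S_def by (rule bdd_belowI[of _ tz]) auto
  define T where "T = Inf S"
  have TS: "T \<in> S" unfolding T_def by (rule closed_contains_Inf[OF ne bb cS])
  then obtain k1 where k1: "k1 \<in> K" and T1: "tz \<le> T" "b T \<le> F k1 T" unfolding S_def by auto
  have below: "F j s < b s" if "j \<in> K" "tz \<le> s" "s < T" for j s
  proof (rule ccontr)
    assume "\<not> F j s < b s"
    hence "s \<in> S" using that TS unfolding S_def by (auto simp: not_less)
    hence "T \<le> s" unfolding T_def by (rule cInf_lower[OF _ bb])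
    thus False using that by auto
  qed
  have Tgt: "T > tz" using T1 init[OF k1] by (cases "T = tz") auto
  have leT: "F j T \<le> b T" if j: "j \<in> K" for j
  proof -
    have c: "continuous_on {tz..T} (\<lambda>s. b s - F j s)"
      by (intro continuous_intros continuous_on_subset[OF cb] continuous_on_subset[OF cF[OF j]]) auto
    have "((\<lambda>s. b s - F j s) \<longlongrightarrow> b T - F j T) (at_left T)"
    proof -
      have "((\<lambda>s. b s - F j s) \<longlongrightarrow> b T - F j T) (at T within {tz..T})"
        using c Tgt by (simp add: continuous_on_def)
      moreover have "at_left T = at T within {tz..T}"
        using Tgt by (intro at_within_nhd[of _ "{tz<..}"]) auto
      ultimately show ?thesis by simp
    qed
    moreover have "eventually (\<lambda>s. b s - F j s \<ge> 0) (at_left T)"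
      using Tgt unfolding eventually_at_left_field
      by (intro exI[of _ tz]) (auto intro: less_imp_le below[OF j])
    moreover have "at_left T \<noteq> bot" by simp
    ultimately have "b T - F j T \<ge> 0" by (intro tendsto_lowerbound) auto
    thus ?thesis by simp
  qed
  have eq: "F k1 T = b T" using leT[OF k1] T1 by simp
  have lt: "F' k1 T < b' T" using touch[OF k1 Tgt eq leT] .
  have "((\<lambda>s. F k1 s - b s) has_real_derivative F' k1 T - b' T) (at T within {tz..})"
    using Tgt by (intro derivative_intros dF[OF k1] db) auto
  from has_real_derivative_neg_dec_left[OF this] lt
  obtain d where d: "d > 0" "\<And>h. h > 0 \<Longrightarrow> T - h \<in> {tz..} \<Longrightarrow> h < d \<Longrightarrow> F k1 T - b T < F k1 (T - h) - b (T - h)"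
    by auto
  define h where "h = min (d/2) ((T - tz)/2)"
  have h1: "0 < h" "h < d" "h \<le> (T - tz)/2"
    using d(1) Tgt unfolding h_def by (simp_all only: min_less_iff_conj min_less_iff_disj min_le_iff_disj) auto
  have "F k1 T - b T < F k1 (T - h) - b (T - h)" using h1 Tgt by (intro d(2)) auto
  moreover have "F k1 (T - h) < b (T - h)" using Tgt h1 by (intro below[OF k1]) auto
  ultimately show False using eq by simp
qed
locale csf =
  fixes N :: nat and m :: "nat \<Rightarrow> real" and \<sigma> p \<kappa> :: real
    and \<phi> :: "real \<Rightarrow> real"
    and x v :: "nat \<Rightarrow> real \<Rightarrow> 'a::euclidean_space" and \<theta> :: "nat \<Rightarrow> real \<Rightarrow> real"
  assumes N1: "N \<ge> 1"
    and mpos: "\<forall>i<N. m i > 0"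
    and sig: "\<sigma> > 0" and pp: "p > 0" and kap: "\<kappa> > 0"
    and ker: "comm_kernel \<phi>"
    and phis: "(INF r\<in>{0..}. \<phi> r) > 0"
    and gap: "(INF r\<in>{0..}. \<phi> r) * (\<Sum>i<N. m i)
           > \<sigma> * ((\<Sum>i<N. m i * \<theta> i 0) / (\<Sum>i<N. m i))"
    and th0: "\<forall>i<N. \<theta> i 0 > 0"
    and sol: "CSF_solution N m \<sigma> p \<kappa> \<phi> x v \<theta>"
begin

definition "ps = (INF r\<in>{0..}. \<phi> r)"
definition "MM = (\<Sum>i<N. m i)"
definition "thb = (\<Sum>i<N. m i * \<theta> i 0) / MM"
definition "ph i j t = \<phi> (norm (x i t - x j t))"
definition "dth i t = \<kappa> * (\<Sum>j<N. m j * ph i j t * (\<theta> j t - \<theta> i t))"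
definition "dv i t = (\<Sum>j<N. (m j * ph i j t) *\<^sub>R (v j t - v i t))
            + (\<sigma> * (\<theta> i t - norm (v i t) powr p)) *\<^sub>R v i t"

lemma ps_pos: "ps > 0" using phis by (simp add: ps_def)

lemma ph_ge: "ph i j t \<ge> ps"
proof -
  have "bdd_below (\<phi> ` {0..})" using ker unfolding comm_kernel_def
    by (intro bdd_belowI2[of _ 0]) (auto intro: less_imp_le)
  thus ?thesis unfolding ps_def ph_def by (rule cINF_lower) auto
qed

lemma mph_pos: "j < N \<Longrightarrow> m j * ph i j t > 0"
  using mpos ph_ge[of i j t] ps_pos by (intro mult_pos_pos) auto

lemma ph_sym: "ph i j t = ph j i t"
  unfolding ph_def by (simp add: norm_minus_commute)

lemma MM_pos: "MM > 0"
proof -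
  have "0 < m 0" using mpos N1 by auto
  also have "m 0 \<le> MM" unfolding MM_def using mpos N1
    by (intro member_le_sum) (auto intro: less_imp_le)
  finally show ?thesis .
qed

lemma thb_pos: "thb > 0"
proof -
  have "(\<Sum>i<N. m i * \<theta> i 0) > 0" using mpos th0 N1
    by (intro sum_pos) (auto simp: lessThan_empty_iff)
  thus ?thesis unfolding thb_def using MM_pos by simp
qed

lemma gap': "ps * MM > \<sigma> * thb" using gap unfolding ps_def MM_def thb_def by simp

lemma dth: "t \<ge> 0 \<Longrightarrow> i < N \<Longrightarrow> (\<theta> i has_real_derivative dth i t) (at t within {0..})"
  using sol unfolding CSF_solution_def dth_def ph_def by auto

lemma dv: "t \<ge> 0 \<Longrightarrow> i < N \<Longrightarrow> (v i has_vector_derivative dv i t) (at t within {0..})"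
  using sol unfolding CSF_solution_def dv_def ph_def by auto

lemma conservation: "t \<ge> 0 \<Longrightarrow> (\<Sum>i<N. m i * \<theta> i t) = MM * thb"
proof -
  have z: "(\<Sum>i<N. m i * dth i t) = 0" for t
  proof -
    have "(\<Sum>i<N. m i * dth i t) = \<kappa> * ((\<Sum>i<N. \<Sum>j<N. m i * m j * ph i j t * \<theta> j t)
            - (\<Sum>i<N. \<Sum>j<N. m i * m j * ph i j t * \<theta> i t))"
      unfolding dth_def by (simp add: sum_distrib_left sum_subtractf[symmetric] algebra_simps)
    also have "(\<Sum>i<N. \<Sum>j<N. m i * m j * ph i j t * \<theta> j t) = (\<Sum>i<N. \<Sum>j<N. m i * m j * ph i j t * \<theta> i t)"
      by (subst sum.swap) (simp add: ph_sym mult.commute mult.left_commute)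
    finally show ?thesis by simp
  qed
  have "\<exists>c. \<forall>s\<in>{0..}. (\<Sum>i<N. m i * \<theta> i s) = c"
  proof (rule has_field_derivative_zero_constant)
    fix s :: real assume "s \<in> {0..}"
    hence "((\<lambda>s. \<Sum>i<N. m i * \<theta> i s) has_real_derivative (\<Sum>i<N. m i * dth i s)) (at s within {0..})"
      by (intro derivative_eq_intros) (auto intro: dth)
    thus "((\<lambda>s. \<Sum>i<N. m i * \<theta> i s) has_real_derivative 0) (at s within {0..})" using z by simp
  qed auto
  then obtain c where c: "\<And>s. s \<ge> 0 \<Longrightarrow> (\<Sum>i<N. m i * \<theta> i s) = c" by auto
  have "MM * thb = (\<Sum>i<N. m i * \<theta> i 0)" unfolding thb_def using MM_pos by simp
  thus "t \<ge> 0 \<Longrightarrow> ?thesis" using c[of t] c[of 0] by simp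
qed

definition "lam = \<kappa> * ps * MM / 2"
definition "Kth = 1 + (\<Sum>i<N. \<bar>\<theta> i 0 - thb\<bar>)"

lemma lam_pos: "lam > 0" using kap ps_pos MM_pos by (simp add: lam_def)
lemma Kth_pos: "Kth > 0" unfolding Kth_def by (simp add: add_pos_nonneg sum_nonneg)

lemma theta_bound:
  assumes "t \<ge> 0" "i < N"
  shows "\<bar>\<theta> i t - thb\<bar> < Kth * exp (- lam * t)"
proof -
  define F where "F = (\<lambda>(k::nat \<times> bool) t. if snd k then \<theta> (fst k) t - thb else thb - \<theta> (fst k) t)"
  define F' where "F' = (\<lambda>(k::nat \<times> bool) t. if snd k then dth (fst k) t else - dth (fst k) t)"
  define b where "b = (\<lambda>t. Kth * exp (- lam * t))"
  define b' where "b' = (\<lambda>t. - lam * (Kth * exp (- lam * t)))"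
  have main: "F k t < b t" if "k \<in> {..<N} \<times> UNIV" "t \<ge> 0" for k t
  proof (rule first_cross[where tz=0 and F=F and b=b and K="{..<N} \<times> UNIV" and F'=F' and b'=b', OF _ _ _ _ _ that])
    show "finite ({..<N} \<times> (UNIV::bool set))" by simp
    fix k and t :: real assume k: "k \<in> {..<N} \<times> (UNIV::bool set)" and t: "0 \<le> t"
    obtain i s where ks: "k = (i, s)" by (cases k)
    have i: "i < N" using k ks by auto
    show "(F k has_real_derivative F' k t) (at t within {0..})"
    proof (cases s)
      case True
      then show ?thesis unfolding ks F_def F'_def using dth[OF t i]
        by (auto intro!: derivative_eq_intros)
    next
      case False
      then show ?thesis unfolding ks F_def F'_def using dth[OF t i]
        by (auto intro!: derivative_eq_intros)
    qed
  next
    fix t :: real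
    show "(b has_real_derivative b' t) (at t within {0..})" unfolding b_def b'_def
      by (auto intro!: derivative_eq_intros)
  next
    fix k assume k: "k \<in> {..<N} \<times> (UNIV::bool set)"
    obtain i s where ks: "k = (i, s)" by (cases k)
    have i: "i < N" using k ks by auto
    have "\<bar>\<theta> i 0 - thb\<bar> \<le> (\<Sum>i<N. \<bar>\<theta> i 0 - thb\<bar>)"
      using i by (intro member_le_sum) auto
    thus "F k 0 < b 0" unfolding ks F_def b_def Kth_def by auto
  next
    fix k and t :: real assume k: "k \<in> {..<N} \<times> (UNIV::bool set)" and t: "0 < t" and eq: "F k t = b t"
      and all: "\<And>j. j \<in> {..<N} \<times> (UNIV::bool set) \<Longrightarrow> F j t \<le> b t"
    obtain i s where ks: "k = (i, s)" by (cases k)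
    have i: "i < N" using k ks by auto
    have bpos: "b t > 0" unfolding b_def using Kth_pos by simp
    have up: "\<theta> j t - thb \<le> b t" if "j < N" for j using all[of "(j, True)"] that by (simp add: F_def)
    have lo: "thb - \<theta> j t \<le> b t" if "j < N" for j using all[of "(j, False)"] that by (simp add: F_def)
    have cons: "(\<Sum>j<N. m j * \<theta> j t) = MM * thb" using conservation t by simp
    have "-lam * b t > - \<kappa> * ps * MM * b t" unfolding lam_def
      using bpos kap ps_pos MM_pos by (simp add: mult_pos_pos)
    show "F' k t < b' t"
    proof (cases s)
      case True
      have th: "\<theta> i t = thb + b t" using eq True by (simp add: ks F_def)
      have "(\<Sum>j<N. m j * ph i j t * (\<theta> j t - \<theta> i t)) \<le> (\<Sum>j<N. m j * ps * (\<theta> j t - \<theta> i t))"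
      proof (rule sum_mono)
        fix j assume j: "j \<in> {..<N}"
        have a: "\<theta> j t - \<theta> i t \<le> 0" using up[of j] j th by auto
        have b: "m j * ps \<le> m j * ph i j t" using mpos j ph_ge by (simp add: mult_left_mono)
        show "m j * ph i j t * (\<theta> j t - \<theta> i t) \<le> m j * ps * (\<theta> j t - \<theta> i t)"
          by (rule mult_right_mono_neg[OF b a])
      qed
      also have "\<dots> = ps * ((\<Sum>j<N. m j * \<theta> j t) - \<theta> i t * MM)"
        unfolding MM_def by (simp add: sum_distrib_left sum_subtractf algebra_simps)
      also have "\<dots> = - ps * MM * b t" using cons th by (simp add: algebra_simps)
      finally have S: "(\<Sum>j<N. m j * ph i j t * (\<theta> j t - \<theta> i t)) \<le> - ps * MM * b t" .
      have "dth i t \<le> \<kappa> * (- ps * MM * b t)" unfolding dth_def using mult_left_mono[OF S, of \<kappa>] kap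
        by simp
      thus ?thesis using \<open>-lam * b t > _\<close> True unfolding ks F'_def b'_def b_def by simp
    next
      case False
      have th: "\<theta> i t = thb - b t" using eq False by (simp add: ks F_def)
      have "(\<Sum>j<N. m j * ps * (\<theta> j t - \<theta> i t)) \<le> (\<Sum>j<N. m j * ph i j t * (\<theta> j t - \<theta> i t))"
      proof (rule sum_mono)
        fix j assume j: "j \<in> {..<N}"
        have "\<theta> j t - \<theta> i t \<ge> 0" using lo[of j] j th by auto
        moreover have "m j * ps \<le> m j * ph i j t" using mpos j ph_ge by (simp add: mult_left_mono)
        ultimately show "m j * ps * (\<theta> j t - \<theta> i t) \<le> m j * ph i j t * (\<theta> j t - \<theta> i t)"
          by (simp add: mult_right_mono)
      qed
      moreover have "(\<Sum>j<N. m j * ps * (\<theta> j t - \<theta> i t)) = ps * ((\<Sum>j<N. m j * \<theta> j t) - \<theta> i t * MM)"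
        unfolding MM_def by (simp add: sum_distrib_left sum_subtractf algebra_simps)
      moreover have "ps * ((\<Sum>j<N. m j * \<theta> j t) - \<theta> i t * MM) = ps * MM * b t" unfolding cons th by (simp add: algebra_simps)
      ultimately have S: "ps * MM * b t \<le> (\<Sum>j<N. m j * ph i j t * (\<theta> j t - \<theta> i t))" by simp
      have "dth i t \<ge> \<kappa> * (ps * MM * b t)" unfolding dth_def using mult_left_mono[OF S, of \<kappa>] kap
        by simp
      thus ?thesis using \<open>-lam * b t > _\<close> False unfolding ks F'_def b'_def b_def by simp
    qed
  qed
  have "F (i, True) t < b t" "F (i, False) t < b t" using main assms by auto
  thus ?thesis unfolding F_def b_def by auto
qed

definition "Th = thb + Kth"
definition "V = 1 + (\<Sum>i<N. norm (v i 0)) + (Th + 1) powr (1/p)"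

lemma theta_le: "t \<ge> 0 \<Longrightarrow> i < N \<Longrightarrow> \<theta> i t < Th"
proof -
  assume t: "t \<ge> 0" and i: "i < N"
  have "exp (- lam * t) \<le> 1" using lam_pos t by simp
  hence "Kth * exp (- lam * t) \<le> Kth" using Kth_pos by (simp add: mult_left_le)
  thus ?thesis using theta_bound[OF t i] unfolding Th_def by linarith
qed

lemma Th_pos: "Th > 0" using thb_pos Kth_pos by (simp add: Th_def)

lemma V_pos: "V > 0" unfolding V_def by (simp add: add_pos_nonneg sum_nonneg)

lemma Vp: "V powr p > Th"
proof -
  have "(Th + 1) powr (1/p) \<le> V" unfolding V_def by (simp add: sum_nonneg)
  hence "((Th + 1) powr (1/p)) powr p \<le> V powr p" using pp by (intro powr_mono2) auto
  moreover have "((Th + 1) powr (1/p)) powr p = Th + 1" using pp Th_pos by (simp add: powr_powr)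
  ultimately show ?thesis by simp
qed

lemma v_bound:
  assumes "t \<ge> 0" "i < N"
  shows "norm (v i t) < V"
proof -
  define F where "F = (\<lambda>i t. inner (v i t) (v i t))"
  define F' where "F' = (\<lambda>i t. 2 * inner (v i t) (dv i t))"
  have main: "F k t < (\<lambda>_. V\<^sup>2) t" if "k \<in> {..<N}" "t \<ge> 0" for k t
  proof (rule first_cross[where tz=0 and F=F and b="\<lambda>_. V\<^sup>2" and K="{..<N}" and F'=F' and b'="\<lambda>_. 0", OF _ _ _ _ _ that])
    show "finite {..<N}" by simp
  next
    fix k and t :: real assume k: "k \<in> {..<N}" and t: "0 \<le> t"
    show "(F k has_real_derivative F' k t) (at t within {0..})"
      unfolding F_def F'_def using dv[OF t] k by (intro sq_deriv) auto
  next
    fix t :: real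
    show "((\<lambda>_. V\<^sup>2) has_real_derivative 0) (at t within {0..})" by simp
  next
    fix k assume k: "k \<in> {..<N}"
    have "norm (v k 0) \<le> (\<Sum>i<N. norm (v i 0))" using k by (intro member_le_sum) auto
    moreover have "(Th + 1) powr (1/p) \<ge> 0" by simp
    ultimately have "norm (v k 0) < V" unfolding V_def by linarith
    hence "norm (v k 0) ^ 2 < V ^ 2" by (simp add: power_strict_mono)
    thus "F k 0 < V\<^sup>2" unfolding F_def by (simp add: power2_norm_eq_inner)
  next
    fix k and t :: real assume k: "k \<in> {..<N}" and t: "0 < t" and eq: "F k t = V\<^sup>2"
      and all: "\<And>j. j \<in> {..<N} \<Longrightarrow> F j t \<le> V\<^sup>2"
    have nk: "norm (v k t) = V" using eq V_pos unfolding F_def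
      by (metis norm_ge_zero power2_eq_iff_nonneg power2_norm_eq_inner less_imp_le)
    have nj: "norm (v j t) \<le> V" if "j < N" for j using all[of j] that V_pos unfolding F_def
      by (metis lessThan_iff less_imp_le power2_le_imp_le power2_norm_eq_inner)
    have "inner (v k t) (dv k t) = (\<Sum>j<N. (m j * ph k j t) * inner (v k t) (v j t - v k t))
            + (\<sigma> * (\<theta> k t - norm (v k t) powr p)) * inner (v k t) (v k t)"
      unfolding dv_def by (simp add: inner_add_right inner_sum_right)
    also have "\<dots> < 0"
    proof (rule add_nonpos_neg)
      show "(\<Sum>j<N. (m j * ph k j t) * inner (v k t) (v j t - v k t)) \<le> 0"
      proof (rule sum_nonpos)
        fix j assume j: "j \<in> {..<N}"
        have "inner (v k t) (v j t - v k t) = inner (v k t) (v j t) - norm (v k t)^2"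
          by (simp add: inner_diff_right power2_norm_eq_inner)
        also have "\<dots> \<le> norm (v k t) * norm (v j t) - norm (v k t)^2"
          using norm_cauchy_schwarz by simp
        also have "\<dots> \<le> 0" using nk nj[of j] j V_pos by (simp add: power2_eq_square mult_left_mono)
        finally have "inner (v k t) (v j t - v k t) \<le> 0" .
        moreover have "m j * ph k j t \<ge> 0" using mph_pos[of j k t] j by simp
        ultimately show "(m j * ph k j t) * inner (v k t) (v j t - v k t) \<le> 0"
          by (simp add: mult_nonneg_nonpos)
      qed
    next
      have "\<theta> k t < Th" using theta_le t k by auto
      hence "\<theta> k t - norm (v k t) powr p < 0" using Vp nk by simp
      moreover have "inner (v k t) (v k t) > 0" using nk V_pos
        by (metis inner_gt_zero_iff norm_zero less_irrefl)
      ultimately show "(\<sigma> * (\<theta> k t - norm (v k t) powr p)) * inner (v k t) (v k t) < 0"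
        using sig by (simp add: mult_pos_neg mult_neg_pos)
    qed
    finally show "F' k t < 0" unfolding F'_def by simp
  qed
  have "norm (v i t) ^ 2 < V ^ 2" using main[of i t] assms unfolding F_def by (simp add: power2_norm_eq_inner)
  thus ?thesis by (rule power_less_imp_less_base) (use V_pos in auto)
qed

lemma coupling:
  assumes i: "i < N" and j: "j < N"
    and all: "\<And>k l. k < N \<Longrightarrow> l < N \<Longrightarrow> norm (v k t - v l t) \<le> norm (v i t - v j t)"
  shows "inner (v i t - v j t) ((\<Sum>k<N. (m k * ph i k t) *\<^sub>R (v k t - v i t)) - (\<Sum>k<N. (m k * ph j k t) *\<^sub>R (v k t - v j t)))
         \<le> - ps * MM * (norm (v i t - v j t))\<^sup>2"
proof -
  define w where "w = v i t - v j t"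
  have "inner w ((\<Sum>k<N. (m k * ph i k t) *\<^sub>R (v k t - v i t)) - (\<Sum>k<N. (m k * ph j k t) *\<^sub>R (v k t - v j t)))
     = (\<Sum>k<N. (m k * ph i k t) * inner w (v k t - v i t) - (m k * ph j k t) * inner w (v k t - v j t))"
    by (simp add: inner_diff_right inner_sum_right sum.distrib sum_subtractf)
  also have "\<dots> \<le> (\<Sum>k<N. - (m k * ps) * (norm w)\<^sup>2)"
  proof (rule sum_mono)
    fix k assume k: "k \<in> {..<N}"
    define al where "al = inner w (v k t - v i t)"
    define be where "be = - inner w (v k t - v j t)"
    have sum: "al + be = - (norm w)\<^sup>2" unfolding al_def be_def w_def
      by (simp add: inner_diff_right inner_diff_left power2_norm_eq_inner inner_commute algebra_simps)
    have "al = inner w (v k t - v j t) - (norm w)\<^sup>2" unfolding al_def w_def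
      by (simp add: inner_diff_right inner_diff_left power2_norm_eq_inner inner_commute algebra_simps)
    also have "\<dots> \<le> norm w * norm (v k t - v j t) - (norm w)\<^sup>2" using norm_cauchy_schwarz by simp
    also have "\<dots> \<le> 0" using all[of k j] k j unfolding w_def[symmetric]
      by (simp add: power2_eq_square mult_left_mono)
    finally have al: "al \<le> 0" .
    have "be = inner w (v i t - v k t) - (norm w)\<^sup>2" unfolding be_def w_def
      by (simp add: inner_diff_right inner_diff_left power2_norm_eq_inner inner_commute algebra_simps)
    also have "\<dots> \<le> norm w * norm (v i t - v k t) - (norm w)\<^sup>2" using norm_cauchy_schwarz by simp
    also have "\<dots> \<le> 0" using all[of i k] k i unfolding w_def[symmetric]
      by (simp add: power2_eq_square mult_left_mono)
    finally have be: "be \<le> 0" .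
    have "m k * ph i k t * al \<le> m k * ps * al"
      using mult_right_mono_neg[OF _ al, of "m k * ps" "m k * ph i k t"] mpos k ph_ge by (simp add: mult_left_mono)
    moreover have "m k * ph j k t * be \<le> m k * ps * be"
      using mult_right_mono_neg[OF _ be, of "m k * ps" "m k * ph j k t"] mpos k ph_ge by (simp add: mult_left_mono)
    ultimately have "m k * ph i k t * al + m k * ph j k t * be \<le> m k * ps * (al + be)"
      by (simp add: algebra_simps)
    thus "(m k * ph i k t) * inner w (v k t - v i t) - (m k * ph j k t) * inner w (v k t - v j t)
          \<le> - (m k * ps) * (norm w)\<^sup>2" using sum unfolding al_def be_def by simp
  qed
  also have "\<dots> = - ps * MM * (norm w)\<^sup>2" unfolding MM_def
    by (simp add: sum_distrib_left sum_distrib_right sum_negf algebra_simps)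
  finally show ?thesis unfolding w_def .
qed

lemma monot:
  fixes a b :: "'b::real_inner"
  shows "inner (a - b) ((norm a powr p) *\<^sub>R a - (norm b powr p) *\<^sub>R b) \<ge> 0"
proof -
  define P where "P = norm a powr p"
  define Q where "Q = norm b powr p"
  have "inner (a - b) (P *\<^sub>R a - Q *\<^sub>R b) = P * (norm a)\<^sup>2 + Q * (norm b)\<^sup>2 - (P + Q) * inner a b"
    by (simp add: inner_diff_right inner_diff_left power2_norm_eq_inner inner_commute algebra_simps)
  also have "\<dots> \<ge> P * (norm a)\<^sup>2 + Q * (norm b)\<^sup>2 - (P + Q) * (norm a * norm b)"
    using mult_left_mono[OF norm_cauchy_schwarz[of a b], of "P + Q"] by (simp add: P_def Q_def)
  moreover have "P * (norm a)\<^sup>2 + Q * (norm b)\<^sup>2 - (P + Q) * (norm a * norm b)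
      = (P * norm a - Q * norm b) * (norm a - norm b)" by (simp add: power2_eq_square algebra_simps)
  moreover have "(P * norm a - Q * norm b) * (norm a - norm b) \<ge> 0"
  proof (cases "norm a \<le> norm b")
    case True
    hence "P \<le> Q" unfolding P_def Q_def using pp by (intro powr_mono2) auto
    hence "P * norm a \<le> Q * norm b" using True by (intro mult_mono) (auto simp: Q_def)
    thus ?thesis using True by (intro mult_nonpos_nonpos) auto
  next
    case False
    hence "Q \<le> P" unfolding P_def Q_def using pp by (intro powr_mono2) auto
    hence "Q * norm b \<le> P * norm a" using False by (intro mult_mono) (auto simp: P_def)
    thus ?thesis using False by (intro mult_nonneg_nonneg) auto
  qed
  ultimately have "0 \<le> inner (a - b) (P *\<^sub>R a - Q *\<^sub>R b)" by linarith
  thus ?thesis by (simp add: P_def Q_def)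
qed

lemma friction:
  assumes i: "i < N" and j: "j < N" and t: "t \<ge> 0"
  shows "inner (v i t - v j t) ((\<sigma> * (\<theta> i t - norm (v i t) powr p)) *\<^sub>R v i t - (\<sigma> * (\<theta> j t - norm (v j t) powr p)) *\<^sub>R v j t)
         \<le> \<sigma> * (\<theta> i t * (norm (v i t - v j t))\<^sup>2 + \<bar>\<theta> i t - \<theta> j t\<bar> * (norm (v i t - v j t) * V))"
proof -
  define w where "w = v i t - v j t"
  have "inner w ((\<sigma> * (\<theta> i t - norm (v i t) powr p)) *\<^sub>R v i t - (\<sigma> * (\<theta> j t - norm (v j t) powr p)) *\<^sub>R v j t)
    = \<sigma> * (\<theta> i t * (norm w)\<^sup>2 + (\<theta> i t - \<theta> j t) * inner w (v j t))
      - \<sigma> * inner w ((norm (v i t) powr p) *\<^sub>R v i t - (norm (v j t) powr p) *\<^sub>R v j t)"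
    unfolding w_def by (simp add: inner_diff_right inner_diff_left power2_norm_eq_inner inner_commute algebra_simps)
  also have "\<dots> \<le> \<sigma> * (\<theta> i t * (norm w)\<^sup>2 + (\<theta> i t - \<theta> j t) * inner w (v j t))"
    using monot[of "v i t" "v j t"] sig unfolding w_def by simp
  also have "\<dots> \<le> \<sigma> * (\<theta> i t * (norm w)\<^sup>2 + \<bar>\<theta> i t - \<theta> j t\<bar> * (norm w * V))"
  proof -
    have "(\<theta> i t - \<theta> j t) * inner w (v j t) \<le> \<bar>(\<theta> i t - \<theta> j t) * inner w (v j t)\<bar>" by simp
    also have "\<dots> = \<bar>\<theta> i t - \<theta> j t\<bar> * \<bar>inner w (v j t)\<bar>" by (simp add: abs_mult)
    also have "\<dots> \<le> \<bar>\<theta> i t - \<theta> j t\<bar> * (norm w * V)"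
    proof (rule mult_left_mono)
      have "\<bar>inner w (v j t)\<bar> \<le> norm w * norm (v j t)" by (rule Cauchy_Schwarz_ineq2)
      also have "\<dots> \<le> norm w * V" using v_bound[OF t j] by (simp add: mult_left_mono)
      finally show "\<bar>inner w (v j t)\<bar> \<le> norm w * V" .
    qed simp
    finally show ?thesis using sig by simp
  qed
  finally show ?thesis unfolding w_def .
qed

definition "gam = ps * MM - \<sigma> * thb"
definition "del = min (gam / 2) lam"
definition "T0 = ln (4 * \<sigma> * Kth / gam + 1) / lam"
definition "CC = 4 * V\<^sup>2 + (8 * \<sigma> * Kth * V / gam)\<^sup>2 + 1"

lemma gam_pos: "gam > 0" using gap' by (simp add: gam_def)
lemma del_pos: "del > 0" using gam_pos lam_pos by (simp add: del_def)
lemma T0_nonneg: "T0 \<ge> 0" unfolding T0_def using sig Kth_pos gam_pos lam_pos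
  by (intro divide_nonneg_pos) auto
lemma CC_pos: "CC > 0" unfolding CC_def by (simp add: add_nonneg_pos)

lemma E_small: assumes "t \<ge> T0" shows "2 * \<sigma> * (Kth * exp (- lam * t)) \<le> gam / 2"
proof -
  define c where "c = 4 * \<sigma> * Kth / gam + 1"
  have c1: "c \<ge> 1" unfolding c_def using sig Kth_pos gam_pos by simp
  have "exp (- lam * t) \<le> exp (- lam * T0)" using assms lam_pos by simp
  also have "exp (- lam * T0) = 1 / c"
  proof -
    have "lam * T0 = ln c" unfolding T0_def c_def[symmetric] using lam_pos by simp
    hence "exp (- lam * T0) = inverse (exp (ln c))" by (simp add: exp_minus)
    also have "\<dots> = 1 / c" using c1 by (simp add: divide_inverse)
    finally show ?thesis .
  qed
  finally have e: "exp (- lam * t) \<le> 1 / c" .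
  have "2 * \<sigma> * (Kth * exp (- lam * t)) \<le> 2 * \<sigma> * (Kth * (1 / c))"
    using e sig Kth_pos by (intro mult_left_mono) auto
  also have "\<dots> \<le> gam / 2"
  proof -
    have "2 * \<sigma> * Kth * 2 \<le> gam * c" unfolding c_def using gam_pos by (simp add: field_simps)
    thus ?thesis using c1 by (simp add: field_simps)
  qed
  finally show ?thesis .
qed

lemma E_decay: assumes "t \<ge> T0" shows "Kth * exp (- lam * t) \<le> Kth * exp (- del * (t - T0) / 2)"
proof -
  have "del / 2 * (t - T0) \<le> lam * (t - T0)" using assms del_pos lam_pos unfolding del_def
    by (intro mult_right_mono) auto
  also have "\<dots> \<le> lam * t" using T0_nonneg lam_pos by (simp add: mult_left_mono)
  finally show ?thesis using Kth_pos by (simp add: mult_left_mono)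
qed

lemma alignment:
  assumes "t \<ge> T0" "i < N" "j < N"
  shows "(norm (v i t - v j t))\<^sup>2 < CC * exp (- del * (t - T0))"
proof -
  define F where "F = (\<lambda>(k::nat \<times> nat) t. inner (v (fst k) t - v (snd k) t) (v (fst k) t - v (snd k) t))"
  define F' where "F' = (\<lambda>(k::nat \<times> nat) t. 2 * inner (v (fst k) t - v (snd k) t) (dv (fst k) t - dv (snd k) t))"
  define b where "b = (\<lambda>t. CC * exp (- del * (t - T0)))"
  define b' where "b' = (\<lambda>t. - del * (CC * exp (- del * (t - T0))))"
  have main: "F k t < b t" if "k \<in> {..<N} \<times> {..<N}" "t \<ge> T0" for k t
  proof (rule first_cross[where tz=T0 and F=F and b=b and K="{..<N} \<times> {..<N}" and F'=F' and b'=b', OF _ _ _ _ _ that])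
    show "finite ({..<N} \<times> {..<N})" by simp
  next
    fix k and t :: real assume k: "k \<in> {..<N} \<times> {..<N}" and t: "T0 \<le> t"
    have t0: "t \<ge> 0" using t T0_nonneg by simp
    have sub: "{T0..} \<subseteq> {0..}" using T0_nonneg by auto
    have "((\<lambda>t. v (fst k) t - v (snd k) t) has_vector_derivative dv (fst k) t - dv (snd k) t) (at t within {T0..})"
    proof (rule has_vector_derivative_diff)
      show "(v (fst k) has_vector_derivative dv (fst k) t) (at t within {T0..})"
        using k by (intro has_vector_derivative_within_subset[OF dv[OF t0] sub]) auto
      show "(v (snd k) has_vector_derivative dv (snd k) t) (at t within {T0..})"
        using k by (intro has_vector_derivative_within_subset[OF dv[OF t0] sub]) auto
    qed
    from sq_deriv[OF this] show "(F k has_real_derivative F' k t) (at t within {T0..})"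
      unfolding F_def F'_def by (simp add: case_prod_beta)
  next
    fix t :: real
    show "(b has_real_derivative b' t) (at t within {T0..})" unfolding b_def b'_def
      by (auto intro!: derivative_eq_intros)
  next
    fix k assume k: "k \<in> {..<N} \<times> {..<N}"
    have "norm (v (fst k) T0 - v (snd k) T0) \<le> norm (v (fst k) T0) + norm (v (snd k) T0)" by (rule norm_triangle_ineq4)
    also have "\<dots> < 2 * V" using v_bound[OF T0_nonneg, of "fst k"] v_bound[OF T0_nonneg, of "snd k"] k by auto
    finally have "(norm (v (fst k) T0 - v (snd k) T0))\<^sup>2 < (2 * V)\<^sup>2"
      by (rule power_strict_mono) auto
    moreover have "(8 * \<sigma> * Kth * V / gam)\<^sup>2 \<ge> 0" by simp
    moreover have "(2 * V)\<^sup>2 = 4 * V\<^sup>2" by (simp add: power_mult_distrib)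
    ultimately have "(norm (v (fst k) T0 - v (snd k) T0))\<^sup>2 < CC" unfolding CC_def by linarith
    thus "F k T0 < b T0" unfolding F_def b_def by (simp add: case_prod_beta power2_norm_eq_inner)
  next
    fix k and t :: real assume k: "k \<in> {..<N} \<times> {..<N}" and t: "T0 < t" and eq: "F k t = b t"
      and all: "\<And>l. l \<in> {..<N} \<times> {..<N} \<Longrightarrow> F l t \<le> b t"
    obtain i j where kij: "k = (i, j)" by (cases k)
    have i: "i < N" and j: "j < N" using k kij by auto
    have t0: "t \<ge> 0" using t T0_nonneg by simp
    define W where "W = norm (v i t - v j t)"
    have bpos: "b t > 0" unfolding b_def using CC_pos by simp
    have W2: "W\<^sup>2 = b t" using eq unfolding F_def kij W_def by (simp add: power2_norm_eq_inner)
    have "W \<noteq> 0" using W2 bpos by auto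
    hence Wpos: "W > 0" unfolding W_def by simp
    have allW: "norm (v k' t - v l t) \<le> W" if "k' < N" "l < N" for k' l
    proof -
      have "(norm (v k' t - v l t))\<^sup>2 \<le> W\<^sup>2" using all[of "(k', l)"] that W2
        unfolding F_def by (simp add: power2_norm_eq_inner)
      thus ?thesis by (rule power2_le_imp_le) (use Wpos in auto)
    qed
    have decomp: "dv i t - dv j t = ((\<Sum>k<N. (m k * ph i k t) *\<^sub>R (v k t - v i t)) - (\<Sum>k<N. (m k * ph j k t) *\<^sub>R (v k t - v j t)))
        + ((\<sigma> * (\<theta> i t - norm (v i t) powr p)) *\<^sub>R v i t - (\<sigma> * (\<theta> j t - norm (v j t) powr p)) *\<^sub>R v j t)"
      unfolding dv_def by (simp add: algebra_simps)
    define E where "E = Kth * exp (- lam * t)"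
    have thi: "\<theta> i t \<le> thb + E" using theta_bound[OF t0 i] unfolding E_def by simp
    have thij: "\<bar>\<theta> i t - \<theta> j t\<bar> \<le> 2 * E" using theta_bound[OF t0 i] theta_bound[OF t0 j] unfolding E_def by arith
    have Es: "2 * \<sigma> * E \<le> gam / 2" using E_small t unfolding E_def by simp
    have Epos: "E \<ge> 0" unfolding E_def using Kth_pos by simp
    have key: "8 * \<sigma> * E * V \<le> gam * W"
    proof -
      have Ed: "E \<le> Kth * exp (- del * (t - T0) / 2)" using E_decay[of t] t unfolding E_def by simp
      have "8 * \<sigma> * E * V = (8 * \<sigma> * V) * E" by simp
      also have "\<dots> \<le> (8 * \<sigma> * V) * (Kth * exp (- del * (t - T0) / 2))"
        by (rule mult_left_mono[OF Ed]) (use sig V_pos in simp)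
      also have "\<dots> = gam * ((8 * \<sigma> * Kth * V / gam) * exp (- del * (t - T0) / 2))"
        using gam_pos by (simp add: field_simps)
      also have "\<dots> \<le> gam * (sqrt CC * exp (- del * (t - T0) / 2))"
      proof -
        have "(8 * \<sigma> * Kth * V / gam) \<le> sqrt ((8 * \<sigma> * Kth * V / gam)\<^sup>2)"
          by (metis abs_ge_self real_sqrt_abs)
        also have "\<dots> \<le> sqrt CC" unfolding CC_def by (intro real_sqrt_le_mono) (simp add: add_nonneg_nonneg)
        finally have "(8 * \<sigma> * Kth * V / gam) \<le> sqrt CC" .
        thus ?thesis using gam_pos by (intro mult_left_mono mult_right_mono) auto
      qed
      also have "sqrt CC * exp (- del * (t - T0) / 2) = W"
      proof -
        have "W = sqrt (b t)" unfolding W2[symmetric] using Wpos by simp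
        also have "b t = CC * (exp (- del * (t - T0) / 2))\<^sup>2" unfolding b_def
          by (simp add: power2_eq_square exp_add[symmetric])
        finally show ?thesis using CC_pos by (simp add: real_sqrt_mult)
      qed
      finally show ?thesis .
    qed
    have "inner (v i t - v j t) (dv i t - dv j t) \<le> - ps * MM * W\<^sup>2 + \<sigma> * (\<theta> i t * W\<^sup>2 + \<bar>\<theta> i t - \<theta> j t\<bar> * (W * V))"
      unfolding decomp inner_add_right W_def
      using coupling[OF i j allW[unfolded W_def]] friction[OF i j t0] by linarith
    also have "\<dots> \<le> - ps * MM * W\<^sup>2 + \<sigma> * ((thb + E) * W\<^sup>2 + 2 * E * (W * V))"
    proof -
      have a1: "\<theta> i t * W\<^sup>2 \<le> (thb + E) * W\<^sup>2" by (rule mult_right_mono[OF thi]) simp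
      have a2: "\<bar>\<theta> i t - \<theta> j t\<bar> * (W * V) \<le> 2 * E * (W * V)"
        by (rule mult_right_mono[OF thij]) (use Wpos V_pos in simp)
      have "\<sigma> * (\<theta> i t * W\<^sup>2 + \<bar>\<theta> i t - \<theta> j t\<bar> * (W * V)) \<le> \<sigma> * ((thb + E) * W\<^sup>2 + 2 * E * (W * V))"
        using a1 a2 sig by (intro mult_left_mono) auto
      thus ?thesis by linarith
    qed
    also have "\<dots> = - gam * W\<^sup>2 + (\<sigma> * E) * W\<^sup>2 + (2 * \<sigma> * E * V) * W"
      unfolding gam_def by (simp add: power2_eq_square algebra_simps)
    also have "\<dots> \<le> - gam * W\<^sup>2 + (gam / 4) * W\<^sup>2 + ((gam / 4) * W) * W"
    proof -
      have "(\<sigma> * E) * W\<^sup>2 \<le> (gam / 4) * W\<^sup>2" using Es by (intro mult_right_mono) auto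
      moreover have "(2 * \<sigma> * E * V) * W \<le> ((gam / 4) * W) * W" using key Wpos by (intro mult_right_mono) auto
      ultimately show ?thesis by linarith
    qed
    also have "\<dots> = - (gam / 2) * b t" using W2 by (simp add: power2_eq_square algebra_simps)
    finally have "F' k t \<le> - gam * b t" unfolding F'_def kij by simp
    also have "\<dots> < - del * b t" using bpos gam_pos unfolding del_def by (simp add: mult_strict_right_mono)
    finally show "F' k t < b' t" unfolding b'_def b_def by simp
  qed
  have "F (i, j) t < b t" using main assms by auto
  thus ?thesis unfolding F_def b_def by (simp add: power2_norm_eq_inner)
qed

lemma pair_bound:
  assumes t: "t \<ge> 0" and i: "i < N" and j: "j < N"
  shows "norm (v i t - v j t) \<le> (sqrt CC * exp (del * T0 / 2)) * exp (- (del / 2) * t)"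
proof -
  define R where "R = sqrt CC * exp (- del * (t - T0) / 2)"
  have Rpos: "R > 0" unfolding R_def using CC_pos by simp
  have ee: "exp (- del * (t - T0)) = exp (- del * (t - T0) / 2) * exp (- del * (t - T0) / 2)"
    by (subst exp_add[symmetric]) simp
  have R2: "R\<^sup>2 = CC * exp (- del * (t - T0))" unfolding R_def ee using CC_pos
    by (simp add: power2_eq_square algebra_simps)
  have "norm (v i t - v j t) \<le> R"
  proof (cases "t \<ge> T0")
    case True
    have "(norm (v i t - v j t))\<^sup>2 < R\<^sup>2" using alignment[OF True i j] R2 by simp
    thus ?thesis using Rpos by (meson less_imp_le power2_less_imp_less less_imp_le)
  next
    case False
    have "norm (v i t - v j t) \<le> norm (v i t) + norm (v j t)" by (rule norm_triangle_ineq4)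
    also have "\<dots> \<le> 2 * V" using v_bound[OF t i] v_bound[OF t j] by simp
    also have "2 * V \<le> sqrt CC"
    proof -
      have "2 * V = sqrt ((2 * V)\<^sup>2)" by (simp only: real_sqrt_abs) (use V_pos in simp)
      also have "\<dots> \<le> sqrt CC" unfolding CC_def by (intro real_sqrt_le_mono) (simp add: power_mult_distrib)
      finally show ?thesis .
    qed
    also have "sqrt CC \<le> R"
    proof -
      have "del * (t - T0) \<le> 0" using False del_pos by (simp add: mult_nonneg_nonpos)
      hence "1 \<le> exp (- del * (t - T0) / 2)" by simp
      thus ?thesis unfolding R_def using CC_pos by simp
    qed
    finally show ?thesis .
  qed
  also have "R = (sqrt CC * exp (del * T0 / 2)) * exp (- (del / 2) * t)"
    unfolding R_def by (simp add: exp_add[symmetric] algebra_simps diff_divide_distrib add_divide_distrib)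
  finally show ?thesis .
qed

end

theorem lemma3p1:
  fixes N :: nat and m :: "nat \<Rightarrow> real" and \<sigma> p \<kappa> :: real
    and \<phi> :: "real \<Rightarrow> real"
    and x v :: "nat \<Rightarrow> real \<Rightarrow> 'a::euclidean_space" and \<theta> :: "nat \<Rightarrow> real \<Rightarrow> real"
  assumes "N \<ge> 1"
    and "\<forall>i<N. m i > 0"
    and "\<sigma> > 0" and "p > 0" and "\<kappa> > 0"
    and "comm_kernel \<phi>"
    and "(INF r\<in>{0..}. \<phi> r) > 0"
    and "(INF r\<in>{0..}. \<phi> r) * (\<Sum>i<N. m i)
           > \<sigma> * ((\<Sum>i<N. m i * \<theta> i 0) / (\<Sum>i<N. m i))"
    and "\<forall>i<N. \<theta> i 0 > 0"
    and "CSF_solution N m \<sigma> p \<kappa> \<phi> x v \<theta>"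
  shows "\<exists>C0 \<delta>. C0 > 0 \<and> \<delta> > 0 \<and> (\<forall>t\<ge>0. vel_diam N v t \<le> C0 * exp (- \<delta> * t))"
proof -
  interpret csf N m \<sigma> p \<kappa> \<phi> x v \<theta> using assms by unfold_locales
  define C0 where "C0 = sqrt CC * exp (del * T0 / 2)"
  have C0: "C0 > 0" unfolding C0_def using CC_pos by simp
  have "\<forall>t\<ge>0. vel_diam N v t \<le> C0 * exp (- (del / 2) * t)"
  proof (intro allI impI)
    fix t :: real assume t: "t \<ge> 0"
    have fin: "finite {norm (v i t - v j t) | i j. i < N \<and> j < N}"
      by (rule finite_image_set2) auto
    have N0: "0 < N" using assms(1) by simp
    have "norm (v 0 t - v 0 t) \<in> {norm (v i t - v j t) | i j. i < N \<and> j < N}" using N0 by blast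
    hence ne: "{norm (v i t - v j t) | i j. i < N \<and> j < N} \<noteq> {}" by blast
    show "vel_diam N v t \<le> C0 * exp (- (del / 2) * t)"
      unfolding vel_diam_def Max_le_iff[OF fin ne] C0_def using pair_bound[OF t] by auto
  qed
  thus ?thesis using C0 del_pos by (intro exI[of _ C0] exI[of _ "del / 2"]) auto
qed

end
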